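(* For disjunctive guarded systems of type $(A,B)$, considering only runs that are strong-fair or finite: for all $n\ge|B|+1$, if $(A,B)^{(1,n)}$ has a deadlocked run that is strong-fair or finite, then $(A,B)^{(1,n+1)}$ has a deadlocked run that is strong-fair or finite.
   Context: A process template is $U=(Q_U,\mathit{init}_U,\Sigma_U,\delta_U)$ with finite states $Q_U$, initial state $\mathit{init}_U$, finite input alphabet $\Sigma_U$ and guarded transitions $\delta_U\subseteq Q_U\times\Sigma_U\times 2^{Q_A\cup Q_B}\times Q_U$; templates $A,B$ have disjoint state sets and disjoint alphabets, and $|B|=|Q_B|$. The system $(A,B)^{(1,n)}$ consists of one copy of $A$ and $n$ copies $B_1,\dots,B_n$ of $B$; a global state $s$ gives each process a local state, a global input $e$ gives each process an input letter, and initially all processes are in their initial states. In a disjunctive system a guard $g$ is satisfied for process $p$ in $s$ iff some process $p'\ne p$ has $s(p')\in g$. A local transition $(q,\sigma,g,q')$ of $p$ is enabled for $(s,e)$ if $s(p)=q$, $e(p)=\sigma$ and $g$ is satisfied for $p$ in $s$; a process is enabled if one of its transitions is; a global step changes the state of exactly one process along an enabled transition. A path is a sequence of configurations $(s_1,e_1,p_1),(s_2,e_2,p_2),\dots$ where $p_t$ makes the step from $s_t$ to $s_{t+1}$ under $e_t$, a configuration $(s,e,\bot)$ occurs (as the last one) exactly when all processes are disabled, and $e_{t+1}(p)=e_t(p)$ for every process $p$ not moving at moment $t$. A run is a maximal path from the initial state. A run is globally deadlocked if it is finite; an infinite run is locally deadlocked if some process is disabled at all moments from some moment on; a run is deadlocked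 if it is globally or locally deadlocked. A run is strong-fair if it is infinite and every process that is enabled infinitely often moves infinitely often. *)

theory Defs
  imports Main "HOL-Library.Extended_Nat"
begin

text \<open>Process templates: states, initial state, input alphabet, guarded transitions
  (q, sigma, g, q').\<close>
record ('q, 'a) template =
  states :: "'q set"
  init   :: 'q
  alpha  :: "'a set"
  trans  :: "('q \<times> 'a \<times> 'q set \<times> 'q) set"

definition wf_template :: "('q, 'a) template \<Rightarrow> 'q set \<Rightarrow> bool" where
  "wf_template U G \<longleftrightarrow> finite (states U) \<and> init U \<in> states U \<and> finite (alpha U) \<and>
     trans U \<subseteq> states U \<times> alpha U \<times> Pow G \<times> states U"

definition tmpl :: "('q, 'a) template \<Rightarrow> ('q, 'a) template \<Rightarrow> nat \<Rightarrow> ('q, 'a) template" where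
  "tmpl A B p = (if p = 0 then A else B)"

definition procs :: "nat \<Rightarrow> nat set" where
  "procs n = {0..n}"

definition guard_sat :: "nat \<Rightarrow> (nat \<Rightarrow> 'q) \<Rightarrow> nat \<Rightarrow> 'q set \<Rightarrow> bool" where
  "guard_sat n s p g \<longleftrightarrow> (\<exists>p'\<in>procs n. p' \<noteq> p \<and> s p' \<in> g)"

definition enabled_trans ::
  "('q, 'a) template \<Rightarrow> ('q, 'a) template \<Rightarrow> nat \<Rightarrow> (nat \<Rightarrow> 'q) \<Rightarrow> (nat \<Rightarrow> 'a) \<Rightarrow> nat
    \<Rightarrow> ('q \<times> 'a \<times> 'q set \<times> 'q) \<Rightarrow> bool" where
  "enabled_trans A B n s e p tr \<longleftrightarrow>
     (case tr of (q, \<sigma>, g, q') \<Rightarrow>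
        tr \<in> trans (tmpl A B p) \<and> s p = q \<and> e p = \<sigma> \<and> guard_sat n s p g)"

definition enabled ::
  "('q, 'a) template \<Rightarrow> ('q, 'a) template \<Rightarrow> nat \<Rightarrow> (nat \<Rightarrow> 'q) \<Rightarrow> (nat \<Rightarrow> 'a) \<Rightarrow> nat \<Rightarrow> bool" where
  "enabled A B n s e p \<longleftrightarrow> (\<exists>tr. enabled_trans A B n s e p tr)"

text \<open>A configuration is (global state, global input, moving process or None = bottom).\<close>
type_synonym ('q, 'a) config = "(nat \<Rightarrow> 'q) \<times> (nat \<Rightarrow> 'a) \<times> nat option"

definition st :: "('q, 'a) config \<Rightarrow> nat \<Rightarrow> 'q" where "st c = fst c"
definition inp :: "('q, 'a) config \<Rightarrow> nat \<Rightarrow> 'a" where "inp c = fst (snd c)"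
definition mv :: "('q, 'a) config \<Rightarrow> nat option" where "mv c = snd (snd c)"

text \<open>Finite runs end exactly with a bottom configuration,
  which occurs exactly when all processes are disabled; hence runs are maximal paths.\<close>
definition is_run ::
  "('q, 'a) template \<Rightarrow> ('q, 'a) template \<Rightarrow> nat \<Rightarrow> (nat \<Rightarrow> ('q, 'a) config) \<Rightarrow> enat \<Rightarrow> bool" where
  "is_run A B n \<rho> L \<longleftrightarrow>
     0 < L \<and>
     (\<forall>p\<in>procs n. st (\<rho> 0) p = init (tmpl A B p)) \<and>
     (\<forall>t. enat t < L \<longrightarrow>
        (\<forall>p\<in>procs n. st (\<rho> t) p \<in> states (tmpl A B p) \<and> inp (\<rho> t) p \<in> alpha (tmpl A B p)) \<and>
        (mv (\<rho> t) = None \<longleftrightarrow> (\<forall>p\<in>procs n. \<not> enabled A B n (st (\<rho> t)) (inp (\<rho> t)) p)) \<and>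
        (mv (\<rho> t) = None \<longrightarrow> L = enat (Suc t)) \<and>
        (mv (\<rho> t) \<noteq> None \<longrightarrow> enat (Suc t) < L) \<and>
        (enat (Suc t) < L \<longrightarrow>
           (\<exists>p tr. mv (\<rho> t) = Some p \<and> p \<in> procs n \<and>
              enabled_trans A B n (st (\<rho> t)) (inp (\<rho> t)) p tr \<and>
              st (\<rho> (Suc t)) = (st (\<rho> t))(p := snd (snd (snd tr))) \<and>
              (\<forall>p'. p' \<noteq> p \<longrightarrow> inp (\<rho> (Suc t)) p' = inp (\<rho> t) p'))))"

definition globally_deadlocked :: "enat \<Rightarrow> bool" where
  "globally_deadlocked L \<longleftrightarrow> L \<noteq> \<infinity>"

definition locally_deadlocked ::
  "('q, 'a) template \<Rightarrow> ('q, 'a) template \<Rightarrow> nat \<Rightarrow> (nat \<Rightarrow> ('q, 'a) config) \<Rightarrow> enat \<Rightarrow> bool" where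
  "locally_deadlocked A B n \<rho> L \<longleftrightarrow> L = \<infinity> \<and>
     (\<exists>p\<in>procs n. \<exists>t0. \<forall>t\<ge>t0. \<not> enabled A B n (st (\<rho> t)) (inp (\<rho> t)) p)"

definition deadlocked ::
  "('q, 'a) template \<Rightarrow> ('q, 'a) template \<Rightarrow> nat \<Rightarrow> (nat \<Rightarrow> ('q, 'a) config) \<Rightarrow> enat \<Rightarrow> bool" where
  "deadlocked A B n \<rho> L \<longleftrightarrow> globally_deadlocked L \<or> locally_deadlocked A B n \<rho> L"

definition strong_fair ::
  "('q, 'a) template \<Rightarrow> ('q, 'a) template \<Rightarrow> nat \<Rightarrow> (nat \<Rightarrow> ('q, 'a) config) \<Rightarrow> enat \<Rightarrow> bool" where
  "strong_fair A B n \<rho> L \<longleftrightarrow> L = \<infinity> \<and>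
     (\<forall>p\<in>procs n.
        (\<forall>t0. \<exists>t\<ge>t0. enabled A B n (st (\<rho> t)) (inp (\<rho> t)) p) \<longrightarrow>
        (\<forall>t0. \<exists>t\<ge>t0. mv (\<rho> t) = Some p))"

definition has_fair_or_finite_deadlock ::
  "('q, 'a) template \<Rightarrow> ('q, 'a) template \<Rightarrow> nat \<Rightarrow> bool" where
  "has_fair_or_finite_deadlock A B n \<longleftrightarrow>
     (\<exists>\<rho> L. is_run A B n \<rho> L \<and> deadlocked A B n \<rho> L \<and>
            (strong_fair A B n \<rho> L \<or> L \<noteq> \<infinity>))"

end

theory Submission
  imports Defs
begin

lemma E1:
  assumes "p \<le> n" "enabled A B n s e p"
  shows "enabled A B (Suc n) (s(Suc n := x)) (e(Suc n := y)) p"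
proof -
  from assms(2) obtain tr where tr: "enabled_trans A B n s e p tr" unfolding enabled_def by blast
  obtain q \<sigma> g q' where trd: "tr = (q, \<sigma>, g, q')" by (cases tr) auto
  from tr trd assms(1) have "enabled_trans A B (Suc n) (s(Suc n := x)) (e(Suc n := y)) p tr"
    unfolding enabled_trans_def guard_sat_def procs_def by fastforce
  thus ?thesis unfolding enabled_def by blast
qed

lemma E2:
  assumes "p \<le> n" "p \<noteq> i" "i \<le> n" "enabled A B (Suc n) (s(Suc n := s i)) (e(Suc n := y)) p"
  shows "enabled A B n s e p"
proof -
  from assms(4) obtain tr where tr: "enabled_trans A B (Suc n) (s(Suc n := s i)) (e(Suc n := y)) p tr" unfolding enabled_def by blast
  obtain q \<sigma> g q' where trd: "tr = (q, \<sigma>, g, q')" by (cases tr) auto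
  from tr trd assms(1,2,3) have "enabled_trans A B n s e p tr"
    unfolding enabled_trans_def guard_sat_def procs_def
    by (auto split: if_splits)
  thus ?thesis unfolding enabled_def by blast
qed

lemma E3:
  assumes "p \<le> n" "i \<le> n" "j \<le> n" "j \<noteq> i" "s j = s i"
    "enabled A B (Suc n) (s(Suc n := s i)) (e(Suc n := y)) p"
  shows "enabled A B n s e p"
proof -
  from assms(6) obtain tr where tr: "enabled_trans A B (Suc n) (s(Suc n := s i)) (e(Suc n := y)) p tr" unfolding enabled_def by blast
  obtain q \<sigma> g q' where trd: "tr = (q, \<sigma>, g, q')" by (cases tr) auto
  from tr trd assms(1-5) have "enabled_trans A B n s e p tr"
    unfolding enabled_trans_def guard_sat_def procs_def
    by (auto split: if_splits) (metis atLeastAtMost_iff zero_le)+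
  thus ?thesis unfolding enabled_def by blast
qed

lemma E4:
  assumes "1 \<le> i" "i \<le> n" "j \<le> n" "j \<noteq> i" "s j = s i"
    "enabled A B (Suc n) (s(Suc n := s i)) (e(Suc n := e i)) (Suc n)"
  shows "enabled A B n s e i"
proof -
  from assms(6) obtain tr where tr: "enabled_trans A B (Suc n) (s(Suc n := s i)) (e(Suc n := e i)) (Suc n) tr" unfolding enabled_def by blast
  obtain q \<sigma> g q' where trd: "tr = (q, \<sigma>, g, q')" by (cases tr) auto
  from tr trd assms(1-5) have "enabled_trans A B n s e i tr"
    unfolding enabled_trans_def guard_sat_def procs_def tmpl_def
    by (auto split: if_splits) (metis atLeastAtMost_iff zero_le le_SucE)+
  thus ?thesis unfolding enabled_def by blast
qed

lemma E5:
  assumes "p \<le> n" "p \<noteq> i" "i \<le> n" "s1 p = s0 p" "e1 p = e0 p"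
    "enabled A B (Suc n) (s1(Suc n := s0 i)) (e1(Suc n := y)) p"
  shows "enabled A B n s1 e1 p \<or> enabled A B n s0 e0 p"
proof -
  from assms(6) obtain tr where tr: "enabled_trans A B (Suc n) (s1(Suc n := s0 i)) (e1(Suc n := y)) p tr" unfolding enabled_def by blast
  obtain q \<sigma> g q' where trd: "tr = (q, \<sigma>, g, q')" by (cases tr) auto
  from tr trd obtain p' where p': "p' \<le> Suc n" "p' \<noteq> p" "(s1(Suc n := s0 i)) p' \<in> g"
    and tt: "tr \<in> trans (tmpl A B p)" "s1 p = q" "e1 p = \<sigma>"
    unfolding enabled_trans_def guard_sat_def procs_def using assms(1) by auto
  show ?thesis
  proof (cases "p' = Suc n")
    case True
    then have "enabled_trans A B n s0 e0 p tr"
      using p' tt trd assms unfolding enabled_trans_def guard_sat_def procs_def by auto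
    thus ?thesis unfolding enabled_def by blast
  next
    case False
    then have "enabled_trans A B n s1 e1 p tr"
      using p' tt trd assms unfolding enabled_trans_def guard_sat_def procs_def by auto
    thus ?thesis unfolding enabled_def by blast
  qed
qed

lemma E6:
  assumes "1 \<le> i" "i \<le> n" "enabled_trans A B n s0 e0 i tr" "\<And>p. p \<noteq> i \<Longrightarrow> s1 p = s0 p"
  shows "enabled_trans A B (Suc n) (s1(Suc n := s0 i)) (e1(Suc n := e0 i)) (Suc n) tr"
proof -
  obtain q \<sigma> g q' where trd: "tr = (q, \<sigma>, g, q')" by (cases tr) auto
  from assms(3) trd obtain p' where p': "p' \<le> n" "p' \<noteq> i" "s0 p' \<in> g"
    and tt: "tr \<in> trans B" "s0 i = q" "e0 i = \<sigma>"
    unfolding enabled_trans_def guard_sat_def procs_def tmpl_def using assms(1) by auto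
  show ?thesis unfolding enabled_trans_def guard_sat_def procs_def tmpl_def trd
    using p' tt trd assms(4)[of p'] by (auto intro!: bexI[of _ p'])
qed

locale cp =
  fixes A B :: "('q, 'a) template" and n :: nat and \<rho> :: "nat \<Rightarrow> ('q, 'a) config"
    and L :: enat and i :: nat
  assumes run: "is_run A B n \<rho> L" and i1: "1 \<le> i" and i2: "i \<le> n"
begin

fun kk :: "nat \<Rightarrow> nat" where
  "kk 0 = 0"
| "kk (Suc t) = kk t + (if mv (\<rho> t) = Some i then 1 else 0)"

definition TT :: "nat \<Rightarrow> nat" where "TT t = t + kk t"

fun pos :: "nat \<Rightarrow> nat \<times> bool" where
  "pos 0 = (0, False)"
| "pos (Suc u) = (case pos u of (t, b) \<Rightarrow>
     if b then (Suc t, False) else if mv (\<rho> t) = Some i then (t, True) else (Suc t, False))"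

definition sync :: "nat \<Rightarrow> ('q, 'a) config" where
  "sync t = ((st (\<rho> t))(Suc n := st (\<rho> t) i), (inp (\<rho> t))(Suc n := inp (\<rho> t) i), mv (\<rho> t))"

definition inter :: "nat \<Rightarrow> ('q, 'a) config" where
  "inter t = ((st (\<rho> (Suc t)))(Suc n := st (\<rho> t) i), (inp (\<rho> (Suc t)))(Suc n := inp (\<rho> t) i), Some (Suc n))"

definition nr :: "nat \<Rightarrow> ('q, 'a) config" where
  "nr u = (case pos u of (t, b) \<Rightarrow> if b then inter t else sync t)"

definition nL :: enat where
  "nL = (case L of enat m \<Rightarrow> enat (TT m) | \<infinity> \<Rightarrow> \<infinity>)"

lemma sync_simps[simp]:
  "st (sync t) = (st (\<rho> t))(Suc n := st (\<rho> t) i)"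
  "inp (sync t) = (inp (\<rho> t))(Suc n := inp (\<rho> t) i)"
  "mv (sync t) = mv (\<rho> t)"
  by (simp_all add: sync_def st_def inp_def mv_def)

lemma inter_simps[simp]:
  "st (inter t) = (st (\<rho> (Suc t)))(Suc n := st (\<rho> t) i)"
  "inp (inter t) = (inp (\<rho> (Suc t)))(Suc n := inp (\<rho> t) i)"
  "mv (inter t) = Some (Suc n)"
  by (simp_all add: inter_def st_def inp_def mv_def)

lemma TT_Suc: "TT (Suc t) = Suc (TT t) + (if mv (\<rho> t) = Some i then 1 else 0)"
  by (simp add: TT_def)

lemma TT_smono: "strict_mono TT"
  unfolding strict_mono_Suc_iff by (simp add: TT_Suc)

lemma TT_less_iff[simp]: "TT a < TT b \<longleftrightarrow> a < b"
  using TT_smono strict_mono_less by blast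

lemma TT_le_iff[simp]: "TT a \<le> TT b \<longleftrightarrow> a \<le> b"
  using TT_smono strict_mono_less_eq by blast

lemma TT_ge: "t \<le> TT t" by (simp add: TT_def)

lemma TT_0[simp]: "TT 0 = 0" by (simp add: TT_def)

lemma pos_TT: "pos (TT t) = (t, False)"
proof (induction t)
  case 0 then show ?case by simp
next
  case (Suc t)
  then show ?case by (cases "mv (\<rho> t) = Some i") (simp_all add: TT_Suc)
qed

lemma pos_TT1: "mv (\<rho> t) = Some i \<Longrightarrow> pos (Suc (TT t)) = (t, True)"
  using pos_TT[of t] by simp

lemma nr_TT[simp]: "nr (TT t) = sync t"
  by (simp add: nr_def pos_TT)

lemma nr_TT1: "mv (\<rho> t) = Some i \<Longrightarrow> nr (Suc (TT t)) = inter t"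
proof -
  assume "mv (\<rho> t) = Some i"
  then have "pos (Suc (TT t)) = (t, True)" by (rule pos_TT1)
  then show ?thesis unfolding nr_def by simp
qed

lemma u_cases: "\<exists>t. u = TT t \<or> (u = Suc (TT t) \<and> mv (\<rho> t) = Some i)"
proof (induction u)
  case 0 then show ?case by (rule exI[of _ 0]) simp
next
  case (Suc u)
  then obtain t where "u = TT t \<or> (u = Suc (TT t) \<and> mv (\<rho> t) = Some i)" by blast
  then show ?case
  proof
    assume u: "u = TT t"
    show ?case
    proof (cases "mv (\<rho> t) = Some i")
      case True then show ?thesis using u by blast
    next
      case False then show ?thesis using u by (intro exI[of _ "Suc t"]) (simp add: TT_Suc)
    qed
  next
    assume "u = Suc (TT t) \<and> mv (\<rho> t) = Some i"
    then show ?case by (intro exI[of _ "Suc t"]) (simp add: TT_Suc)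
  qed
qed

lemma run0: "0 < L" "\<And>p. p \<in> procs n \<Longrightarrow> st (\<rho> 0) p = init (tmpl A B p)"
  using run unfolding is_run_def by auto

lemma runv: "enat t < L \<Longrightarrow> p \<in> procs n \<Longrightarrow>
   st (\<rho> t) p \<in> states (tmpl A B p) \<and> inp (\<rho> t) p \<in> alpha (tmpl A B p)"
  using run unfolding is_run_def by blast

lemma runNone: "enat t < L \<Longrightarrow>
   (mv (\<rho> t) = None \<longleftrightarrow> (\<forall>p\<in>procs n. \<not> enabled A B n (st (\<rho> t)) (inp (\<rho> t)) p))"
  using run unfolding is_run_def by blast

lemma runNoneL: "enat t < L \<Longrightarrow> mv (\<rho> t) = None \<Longrightarrow> L = enat (Suc t)"
  using run unfolding is_run_def by blast

lemma runSome: "enat t < L \<Longrightarrow> mv (\<rho> t) \<noteq> None \<Longrightarrow> enat (Suc t) < L"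
  using run unfolding is_run_def by blast

lemma runStep: "enat t < L \<Longrightarrow> mv (\<rho> t) = Some p \<Longrightarrow>
   p \<in> procs n \<and> (\<exists>tr. enabled_trans A B n (st (\<rho> t)) (inp (\<rho> t)) p tr \<and>
              st (\<rho> (Suc t)) = (st (\<rho> t))(p := snd (snd (snd tr))) \<and>
              (\<forall>p'. p' \<noteq> p \<longrightarrow> inp (\<rho> (Suc t)) p' = inp (\<rho> t) p'))"
proof -
  assume a: "enat t < L" "mv (\<rho> t) = Some p"
  then have "enat (Suc t) < L" using runSome by simp
  with a run show ?thesis unfolding is_run_def by fastforce
qed

lemma moved_enabled: "enat t < L \<Longrightarrow> mv (\<rho> t) = Some p \<Longrightarrow> enabled A B n (st (\<rho> t)) (inp (\<rho> t)) p"
  using runStep unfolding enabled_def by blast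

lemma nL_inf: "L = \<infinity> \<Longrightarrow> nL = \<infinity>" unfolding nL_def by simp
lemma nL_fin: "L = enat m \<Longrightarrow> nL = enat (TT m)" unfolding nL_def by simp

lemma nL_less: "enat (TT t) < nL \<longleftrightarrow> enat t < L"
  using nL_inf nL_fin by (cases L) auto

lemma nL_less1: "mv (\<rho> t) = Some i \<Longrightarrow> enat (Suc (TT t)) < nL \<longleftrightarrow> enat t < L"
proof (cases "L = \<infinity>")
  case False
  then obtain m where enat: "L = enat m" by auto
  assume mi: "mv (\<rho> t) = Some i"
  show ?thesis
  proof
    assume "enat (Suc (TT t)) < nL"
    then have "Suc (TT t) < TT m" using nL_fin[OF enat] by simp
    then have "TT t < TT m" by (rule Suc_lessD)
    then show "enat t < L" using enat by simp
  next
    assume "enat t < L"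
    then have "enat (Suc t) < L" using runSome mi by simp
    then have "Suc t < m" using enat by simp
    then have "TT (Suc t) < TT m" by simp
    then show "enat (Suc (TT t)) < nL" using nL_fin[OF enat] mi by (simp add: TT_Suc)
  qed
next
  case True
  have a: "enat (Suc (TT t)) < nL" by (simp add: nL_inf[OF True])
  have b: "enat t < L" using True by simp
  show ?thesis using a b by blast
qed

end

lemma E1t:
  assumes "p \<le> n" "enabled_trans A B n s e p tr"
  shows "enabled_trans A B (Suc n) (s(Suc n := x)) (e(Suc n := y)) p tr"
proof -
  obtain q \<sigma> g q' where trd: "tr = (q, \<sigma>, g, q')" by (cases tr) auto
  from assms trd show ?thesis
    unfolding enabled_trans_def guard_sat_def procs_def by fastforce
qed

context cp begin

lemma tmpl_i: "tmpl A B i = B" "tmpl A B (Suc n) = B"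
  using i1 by (auto simp: tmpl_def)

lemma sync_valid: "enat t < L \<Longrightarrow> p \<in> procs (Suc n) \<Longrightarrow>
   st (sync t) p \<in> states (tmpl A B p) \<and> inp (sync t) p \<in> alpha (tmpl A B p)"
proof -
  assume a: "enat t < L" "p \<in> procs (Suc n)"
  show ?thesis
  proof (cases "p = Suc n")
    case True
    have "i \<in> procs n" using i2 by (simp add: procs_def)
    then show ?thesis using runv[OF a(1), of i] True tmpl_i by simp
  next
    case False
    then have "p \<in> procs n" using a(2) by (auto simp: procs_def)
    then show ?thesis using runv[OF a(1), of p] False by simp
  qed
qed

lemma inter_valid: "enat t < L \<Longrightarrow> mv (\<rho> t) = Some i \<Longrightarrow> p \<in> procs (Suc n) \<Longrightarrow>
   st (inter t) p \<in> states (tmpl A B p) \<and> inp (inter t) p \<in> alpha (tmpl A B p)"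
proof -
  assume a: "enat t < L" "mv (\<rho> t) = Some i" "p \<in> procs (Suc n)"
  then have s: "enat (Suc t) < L" using runSome by simp
  show ?thesis
  proof (cases "p = Suc n")
    case True
    have "i \<in> procs n" using i2 by (simp add: procs_def)
    then show ?thesis using runv[OF a(1), of i] True tmpl_i by simp
  next
    case False
    then have "p \<in> procs n" using a(3) by (auto simp: procs_def)
    then show ?thesis using runv[OF s, of p] False by simp
  qed
qed

lemma sync_none:
  assumes fin: "\<And>t. enat t < L \<Longrightarrow> mv (\<rho> t) = None \<Longrightarrow> \<exists>j\<in>procs n. j \<noteq> i \<and> st (\<rho> t) j = st (\<rho> t) i"
    and a: "enat t < L"
  shows "mv (sync t) = None \<longleftrightarrow> (\<forall>p\<in>procs (Suc n). \<not> enabled A B (Suc n) (st (sync t)) (inp (sync t)) p)"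
proof
  assume m: "mv (sync t) = None"
  then have m': "mv (\<rho> t) = None" by simp
  then have dis: "\<forall>p\<in>procs n. \<not> enabled A B n (st (\<rho> t)) (inp (\<rho> t)) p" using runNone[OF a] by simp
  obtain j where j: "j \<in> procs n" "j \<noteq> i" "st (\<rho> t) j = st (\<rho> t) i" using fin[OF a m'] by blast
  show "\<forall>p\<in>procs (Suc n). \<not> enabled A B (Suc n) (st (sync t)) (inp (sync t)) p"
  proof
    fix p assume p: "p \<in> procs (Suc n)"
    show "\<not> enabled A B (Suc n) (st (sync t)) (inp (sync t)) p"
    proof
      assume en: "enabled A B (Suc n) (st (sync t)) (inp (sync t)) p"
      show False
      proof (cases "p = Suc n")
        case True
        have "enabled A B n (st (\<rho> t)) (inp (\<rho> t)) i"
          using E4[of i n j "st (\<rho> t)" A B "inp (\<rho> t)"] en True j i1 i2 by (simp add: procs_def)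
        then show False using dis i2 by (auto simp: procs_def)
      next
        case False
        then have "p \<le> n" using p by (auto simp: procs_def)
        then have "enabled A B n (st (\<rho> t)) (inp (\<rho> t)) p"
          using E3[of p n i j "st (\<rho> t)" A B "inp (\<rho> t)"] en j i2 by (simp add: procs_def)
        then show False using dis \<open>p \<le> n\<close> by (auto simp: procs_def)
      qed
    qed
  qed
next
  assume dis: "\<forall>p\<in>procs (Suc n). \<not> enabled A B (Suc n) (st (sync t)) (inp (sync t)) p"
  show "mv (sync t) = None"
  proof (rule ccontr)
    assume "mv (sync t) \<noteq> None"
    then obtain p where p: "mv (\<rho> t) = Some p" by auto
    have pn: "p \<in> procs n" using runStep[OF a p] by simp
    have "enabled A B n (st (\<rho> t)) (inp (\<rho> t)) p" using moved_enabled[OF a p] .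
    then have "enabled A B (Suc n) (st (sync t)) (inp (sync t)) p"
      using E1 pn by (simp add: procs_def)
    then show False using dis pn by (auto simp: procs_def)
  qed
qed

lemma sync_step:
  assumes a: "enat t < L" and p: "mv (\<rho> t) = Some p"
  shows "\<exists>p tr. mv (sync t) = Some p \<and> p \<in> procs (Suc n) \<and>
     enabled_trans A B (Suc n) (st (sync t)) (inp (sync t)) p tr \<and>
     st (nr (Suc (TT t))) = (st (sync t))(p := snd (snd (snd tr))) \<and>
     (\<forall>p'. p' \<noteq> p \<longrightarrow> inp (nr (Suc (TT t))) p' = inp (sync t) p')"
proof -
  obtain tr where pn: "p \<in> procs n" and tr: "enabled_trans A B n (st (\<rho> t)) (inp (\<rho> t)) p tr"
    and s1: "st (\<rho> (Suc t)) = (st (\<rho> t))(p := snd (snd (snd tr)))"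
    and e1: "\<forall>p'. p' \<noteq> p \<longrightarrow> inp (\<rho> (Suc t)) p' = inp (\<rho> t) p'"
    using runStep[OF a p] by blast
  have pn': "p \<in> procs (Suc n)" "p \<le> n" "p \<noteq> Suc n" using pn by (auto simp: procs_def)
  have tr': "enabled_trans A B (Suc n) (st (sync t)) (inp (sync t)) p tr"
    using E1t[OF pn'(2) tr] by simp
  have ni: "i \<noteq> Suc n" using i2 by simp
  show ?thesis
  proof (cases "p = i")
    case True
    have nr: "nr (Suc (TT t)) = inter t" using nr_TT1 p True by simp
    have "st (nr (Suc (TT t))) = (st (sync t))(p := snd (snd (snd tr)))"
      unfolding nr using s1 True ni by (auto simp: fun_eq_iff)
    moreover have "\<forall>p'. p' \<noteq> p \<longrightarrow> inp (nr (Suc (TT t))) p' = inp (sync t) p'"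
      unfolding nr using e1 True by auto
    ultimately show ?thesis using tr' pn' p by (intro exI[of _ p] exI[of _ tr]) auto
  next
    case False
    have nr: "nr (Suc (TT t)) = sync (Suc t)" using nr_TT[of "Suc t"] p False by (simp add: TT_Suc)
    have "st (nr (Suc (TT t))) = (st (sync t))(p := snd (snd (snd tr)))"
      unfolding nr using s1 False pn' by (auto simp: fun_eq_iff)
    moreover have "\<forall>p'. p' \<noteq> p \<longrightarrow> inp (nr (Suc (TT t))) p' = inp (sync t) p'"
      unfolding nr using e1 False by auto
    ultimately show ?thesis using tr' pn' p by (intro exI[of _ p] exI[of _ tr]) auto
  qed
qed

lemma inter_step:
  assumes a: "enat t < L" and p: "mv (\<rho> t) = Some i"
  shows "\<exists>p tr. mv (inter t) = Some p \<and> p \<in> procs (Suc n) \<and>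
     enabled_trans A B (Suc n) (st (inter t)) (inp (inter t)) p tr \<and>
     st (nr (Suc (Suc (TT t)))) = (st (inter t))(p := snd (snd (snd tr))) \<and>
     (\<forall>p'. p' \<noteq> p \<longrightarrow> inp (nr (Suc (Suc (TT t)))) p' = inp (inter t) p')"
proof -
  obtain tr where tr: "enabled_trans A B n (st (\<rho> t)) (inp (\<rho> t)) i tr"
    and s1: "st (\<rho> (Suc t)) = (st (\<rho> t))(i := snd (snd (snd tr)))"
    and e1: "\<forall>p'. p' \<noteq> i \<longrightarrow> inp (\<rho> (Suc t)) p' = inp (\<rho> t) p'"
    using runStep[OF a p] by blast
  have nr: "nr (Suc (Suc (TT t))) = sync (Suc t)" using nr_TT[of "Suc t"] p by (simp add: TT_Suc)
  have tr': "enabled_trans A B (Suc n) (st (inter t)) (inp (inter t)) (Suc n) tr"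
    using E6[OF i1 i2 tr, of "st (\<rho> (Suc t))"] s1 by simp
  have "st (nr (Suc (Suc (TT t)))) = (st (inter t))(Suc n := snd (snd (snd tr)))"
    unfolding nr using s1 by (auto simp: fun_eq_iff)
  moreover have "\<forall>p'. p' \<noteq> Suc n \<longrightarrow> inp (nr (Suc (Suc (TT t)))) p' = inp (inter t) p'"
    unfolding nr by auto
  ultimately show ?thesis using tr' by (intro exI[of _ "Suc n"] exI[of _ tr]) (auto simp: procs_def)
qed

theorem new_run:
  assumes fin: "\<And>t. enat t < L \<Longrightarrow> mv (\<rho> t) = None \<Longrightarrow> \<exists>j\<in>procs n. j \<noteq> i \<and> st (\<rho> t) j = st (\<rho> t) i"
  shows "is_run A B (Suc n) nr nL"
  unfolding is_run_def
proof (intro conjI allI impI)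
  show "0 < nL" using run0(1) nL_less[of 0] by (simp add: zero_enat_def)
  show "\<forall>p\<in>procs (Suc n). st (nr 0) p = init (tmpl A B p)"
  proof
    fix p assume p: "p \<in> procs (Suc n)"
    have n0: "nr 0 = sync 0" using nr_TT[of 0] by simp
    show "st (nr 0) p = init (tmpl A B p)"
    proof (cases "p = Suc n")
      case True
      then show ?thesis using n0 run0(2)[of i] i2 tmpl_i by (simp add: procs_def)
    next
      case False
      then show ?thesis using n0 run0(2)[of p] p by (simp add: procs_def)
    qed
  qed
next
  fix u assume u: "enat u < nL"
  obtain t where t: "u = TT t \<or> (u = Suc (TT t) \<and> mv (\<rho> t) = Some i)" using u_cases by blast
  then show "\<forall>p\<in>procs (Suc n). st (nr u) p \<in> states (tmpl A B p) \<and> inp (nr u) p \<in> alpha (tmpl A B p)"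
    using u sync_valid inter_valid nL_less nL_less1 nr_TT1 by auto
  from t show "mv (nr u) = None \<longleftrightarrow> (\<forall>p\<in>procs (Suc n). \<not> enabled A B (Suc n) (st (nr u)) (inp (nr u)) p)"
  proof
    assume "u = TT t"
    then show ?thesis using sync_none[OF fin] u nL_less by auto
  next
    assume tt: "u = Suc (TT t) \<and> mv (\<rho> t) = Some i"
    then have "enat t < L" using u nL_less1 by auto
    then obtain p tr where "enabled_trans A B (Suc n) (st (inter t)) (inp (inter t)) p tr" "p \<in> procs (Suc n)"
      using inter_step tt by blast
    then have "enabled A B (Suc n) (st (inter t)) (inp (inter t)) p" "p \<in> procs (Suc n)"
      unfolding enabled_def by blast+
    moreover have "nr u = inter t" using tt nr_TT1 by simp
    ultimately show ?thesis by auto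
  qed
  from t show "mv (nr u) = None \<Longrightarrow> nL = enat (Suc u)"
  proof
    assume ut: "u = TT t" and m: "mv (nr u) = None"
    then have "enat t < L" "mv (\<rho> t) = None" using u nL_less by auto
    then have "L = enat (Suc t)" using runNoneL by blast
    then show ?thesis using nL_fin ut \<open>mv (\<rho> t) = None\<close> by (simp add: TT_Suc)
  next
    assume "u = Suc (TT t) \<and> mv (\<rho> t) = Some i" "mv (nr u) = None"
    then show ?thesis using nr_TT1 by auto
  qed
  from t show "mv (nr u) \<noteq> None \<Longrightarrow> enat (Suc u) < nL"
  proof
    assume ut: "u = TT t" and m: "mv (nr u) \<noteq> None"
    then have a: "enat t < L" "mv (\<rho> t) \<noteq> None" using u nL_less by auto
    then have "enat (Suc t) < L" using runSome by blast
    then have "enat (TT (Suc t)) < nL" using nL_less by blast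
    moreover have "Suc u \<le> TT (Suc t)" using ut by (simp add: TT_Suc)
    ultimately show ?thesis by (meson enat_ord_simps(1) le_less_trans)
  next
    assume tt: "u = Suc (TT t) \<and> mv (\<rho> t) = Some i"
    then have "enat t < L" using u nL_less1 by auto
    then have "enat (Suc t) < L" using runSome tt by auto
    then have "enat (TT (Suc t)) < nL" using nL_less by blast
    then show ?thesis using tt by (simp add: TT_Suc)
  qed
  from t show "enat (Suc u) < nL \<Longrightarrow> \<exists>p tr. mv (nr u) = Some p \<and> p \<in> procs (Suc n) \<and>
       enabled_trans A B (Suc n) (st (nr u)) (inp (nr u)) p tr \<and>
       st (nr (Suc u)) = (st (nr u))(p := snd (snd (snd tr))) \<and>
       (\<forall>p'. p' \<noteq> p \<longrightarrow> inp (nr (Suc u)) p' = inp (nr u) p')"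
  proof
    assume ut: "u = TT t" and s: "enat (Suc u) < nL"
    then have a: "enat t < L" using u nL_less by auto
    show ?thesis
    proof (cases "mv (\<rho> t)")
      case None
      then have "L = enat (Suc t)" using runNoneL a by blast
      then have "nL = enat (Suc u)" using nL_fin ut None by (simp add: TT_Suc)
      then show ?thesis using s by simp
    next
      case (Some p)
      then show ?thesis using sync_step[OF a Some] ut by simp
    qed
  next
    assume tt: "u = Suc (TT t) \<and> mv (\<rho> t) = Some i"
    then have "enat t < L" using u nL_less1 by auto
    then show ?thesis using inter_step[of t] tt nr_TT1 by simp
  qed
qed

end

locale cp_inf = cp +
  assumes inf: "L = \<infinity>" and fair: "strong_fair A B n \<rho> L"
    and choice: "(\<forall>t0. \<exists>t\<ge>t0. mv (\<rho> t) = Some i) \<or>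
       (\<exists>t1. \<forall>t\<ge>t1. mv (\<rho> t) \<noteq> Some i \<and> (\<exists>j\<in>procs n. j \<noteq> i \<and> st (\<rho> t) j = st (\<rho> t) i))"
begin

lemma allt: "enat t < L" using inf by simp

lemma evdis_orig:
  assumes "p \<in> procs n" "\<not> (\<forall>t0. \<exists>t\<ge>t0. mv (\<rho> t) = Some p)"
  shows "\<exists>t0. \<forall>t\<ge>t0. \<not> enabled A B n (st (\<rho> t)) (inp (\<rho> t)) p"
  using fair assms unfolding strong_fair_def by blast

lemma en_inter:
  assumes m: "mv (\<rho> t) = Some i" and p: "p \<le> n" "p \<noteq> i"
    and en: "enabled A B (Suc n) (st (inter t)) (inp (inter t)) p"
  shows "enabled A B n (st (\<rho> (Suc t))) (inp (\<rho> (Suc t))) p \<or> enabled A B n (st (\<rho> t)) (inp (\<rho> t)) p"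
proof -
  obtain tr where s1: "st (\<rho> (Suc t)) = (st (\<rho> t))(i := snd (snd (snd tr)))"
    and e1: "\<forall>p'. p' \<noteq> i \<longrightarrow> inp (\<rho> (Suc t)) p' = inp (\<rho> t) p'"
    using runStep[OF allt m] by fastforce
  show ?thesis
    using E5[of p n i "st (\<rho> (Suc t))" "st (\<rho> t)" "inp (\<rho> (Suc t))" "inp (\<rho> t)" A B "inp (\<rho> t) i"]
      p i2 s1 e1 en by simp
qed

lemma u_ge:
  assumes "TT t0 \<le> u" "u = TT t \<or> (u = Suc (TT t) \<and> mv (\<rho> t) = Some i)"
  shows "t0 \<le> t"
proof (rule ccontr)
  assume "\<not> t0 \<le> t"
  then have "Suc t \<le> t0" by simp
  then have "TT (Suc t) \<le> TT t0" by simp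
  then show False using assms by (auto simp: TT_Suc)
qed

lemma evdis_new:
  assumes pn: "p \<in> procs n" and nm: "\<not> (\<forall>t0. \<exists>t\<ge>t0. mv (\<rho> t) = Some p)"
  shows "\<exists>u0. \<forall>u\<ge>u0. \<not> enabled A B (Suc n) (st (nr u)) (inp (nr u)) p"
proof -
  obtain t0 where t0: "\<forall>t\<ge>t0. \<not> enabled A B n (st (\<rho> t)) (inp (\<rho> t)) p"
    using evdis_orig[OF pn nm] by blast
  have pn': "p \<le> n" using pn by (simp add: procs_def)
  obtain t1 where t1: "p = i \<Longrightarrow> \<forall>t\<ge>t1. mv (\<rho> t) \<noteq> Some i \<and> (\<exists>j\<in>procs n. j \<noteq> i \<and> st (\<rho> t) j = st (\<rho> t) i)"
  proof (cases "p = i")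
    case True
    then show ?thesis using choice nm that by blast
  next
    case False
    then show ?thesis using that by blast
  qed
  show ?thesis
  proof (intro exI allI impI)
    fix u assume u: "TT (max t0 t1) \<le> u"
    obtain t where t: "u = TT t \<or> (u = Suc (TT t) \<and> mv (\<rho> t) = Some i)" using u_cases by blast
    have tge: "max t0 t1 \<le> t" using u_ge[OF u t] .
    show "\<not> enabled A B (Suc n) (st (nr u)) (inp (nr u)) p"
    proof
      assume en: "enabled A B (Suc n) (st (nr u)) (inp (nr u)) p"
      from t show False
      proof
        assume ut: "u = TT t"
        then have en': "enabled A B (Suc n) (st (sync t)) (inp (sync t)) p" using en by simp
        show False
        proof (cases "p = i")
          case True
          then obtain j where j: "j \<in> procs n" "j \<noteq> i" "st (\<rho> t) j = st (\<rho> t) i" using t1 tge by auto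
          have "enabled A B n (st (\<rho> t)) (inp (\<rho> t)) p"
            using E3[of p n i j "st (\<rho> t)" A B "inp (\<rho> t)"] en' j pn' i2 by (simp add: procs_def)
          then show False using t0 tge by auto
        next
          case False
          have "enabled A B n (st (\<rho> t)) (inp (\<rho> t)) p"
            using E2[of p n i A B "st (\<rho> t)" "inp (\<rho> t)"] en' False pn' i2 by simp
          then show False using t0 tge by auto
        qed
      next
        assume ut: "u = Suc (TT t) \<and> mv (\<rho> t) = Some i"
        then have en': "enabled A B (Suc n) (st (inter t)) (inp (inter t)) p" using en nr_TT1 by simp
        have "p \<noteq> i" using t1 tge ut by auto
        then have "enabled A B n (st (\<rho> (Suc t))) (inp (\<rho> (Suc t))) p \<or> enabled A B n (st (\<rho> t)) (inp (\<rho> t)) p"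
          using en_inter ut pn' en' by blast
        then show False using t0 tge by auto
      qed
    qed
  qed
qed

lemma movinf_new:
  assumes "\<forall>t0. \<exists>t\<ge>t0. mv (\<rho> t) = Some p"
  shows "\<forall>u0. \<exists>u\<ge>u0. mv (nr u) = Some p"
proof
  fix u0
  obtain t where "t \<ge> u0" "mv (\<rho> t) = Some p" using assms by blast
  then show "\<exists>u\<ge>u0. mv (nr u) = Some p" using TT_ge[of t] by (intro exI[of _ "TT t"]) simp
qed

lemma c_case:
  "(\<forall>u0. \<exists>u\<ge>u0. mv (nr u) = Some (Suc n)) \<or>
   (\<exists>u0. \<forall>u\<ge>u0. \<not> enabled A B (Suc n) (st (nr u)) (inp (nr u)) (Suc n))"
  using choice
proof
  assume a: "\<forall>t0. \<exists>t\<ge>t0. mv (\<rho> t) = Some i"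
  have "\<forall>u0. \<exists>u\<ge>u0. mv (nr u) = Some (Suc n)"
  proof
    fix u0
    obtain t where "t \<ge> u0" "mv (\<rho> t) = Some i" using a by blast
    then show "\<exists>u\<ge>u0. mv (nr u) = Some (Suc n)" using TT_ge[of t] nr_TT1
      by (intro exI[of _ "Suc (TT t)"]) simp
  qed
  then show ?thesis by blast
next
  assume "\<exists>t1. \<forall>t\<ge>t1. mv (\<rho> t) \<noteq> Some i \<and> (\<exists>j\<in>procs n. j \<noteq> i \<and> st (\<rho> t) j = st (\<rho> t) i)"
  then obtain t1 where t1: "\<forall>t\<ge>t1. mv (\<rho> t) \<noteq> Some i \<and> (\<exists>j\<in>procs n. j \<noteq> i \<and> st (\<rho> t) j = st (\<rho> t) i)" by blast
  have nm: "\<not> (\<forall>t0. \<exists>t\<ge>t0. mv (\<rho> t) = Some i)" using t1 by blast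
  have ip: "i \<in> procs n" using i2 by (simp add: procs_def)
  obtain t0 where t0: "\<forall>t\<ge>t0. \<not> enabled A B n (st (\<rho> t)) (inp (\<rho> t)) i"
    using evdis_orig[OF ip nm] by blast
  have "\<forall>u\<ge>TT (max t0 t1). \<not> enabled A B (Suc n) (st (nr u)) (inp (nr u)) (Suc n)"
  proof (intro allI impI notI)
    fix u assume u: "TT (max t0 t1) \<le> u" and en: "enabled A B (Suc n) (st (nr u)) (inp (nr u)) (Suc n)"
    obtain t where t: "u = TT t \<or> (u = Suc (TT t) \<and> mv (\<rho> t) = Some i)" using u_cases by blast
    have tge: "max t0 t1 \<le> t" using u_ge[OF u t] .
    then have ut: "u = TT t" using t t1 by auto
    obtain j where j: "j \<in> procs n" "j \<noteq> i" "st (\<rho> t) j = st (\<rho> t) i" using t1 tge by auto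
    have "enabled A B n (st (\<rho> t)) (inp (\<rho> t)) i"
      using E4[of i n j "st (\<rho> t)" A B "inp (\<rho> t)"] en ut j i1 i2 by (simp add: procs_def)
    then show False using t0 tge by auto
  qed
  then show ?thesis by blast
qed

lemma nL_inf': "nL = \<infinity>" using nL_inf inf by blast

theorem new_fair: "strong_fair A B (Suc n) nr nL"
  unfolding strong_fair_def
proof (intro conjI ballI impI)
  show "nL = \<infinity>" by (rule nL_inf')
  fix p assume p: "p \<in> procs (Suc n)" and en: "\<forall>t0. \<exists>t\<ge>t0. enabled A B (Suc n) (st (nr t)) (inp (nr t)) p"
  show "\<forall>t0. \<exists>t\<ge>t0. mv (nr t) = Some p"
  proof (cases "p = Suc n")
    case True
    then show ?thesis using c_case en by (meson le_trans nat_le_linear)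
  next
    case False
    then have pn: "p \<in> procs n" using p by (auto simp: procs_def)
    show ?thesis
    proof (cases "\<forall>t0. \<exists>t\<ge>t0. mv (\<rho> t) = Some p")
      case True
      then show ?thesis using movinf_new by blast
    next
      case False
      then show ?thesis using evdis_new[OF pn] en by (meson le_trans nat_le_linear)
    qed
  qed
qed

theorem new_dead:
  assumes "locally_deadlocked A B n \<rho> L"
  shows "locally_deadlocked A B (Suc n) nr nL"
proof -
  obtain d t0 where d: "d \<in> procs n" "\<forall>t\<ge>t0. \<not> enabled A B n (st (\<rho> t)) (inp (\<rho> t)) d"
    using assms unfolding locally_deadlocked_def by blast
  have "\<not> (\<forall>t0. \<exists>t\<ge>t0. mv (\<rho> t) = Some d)"
    using d(2) moved_enabled allt by blast
  then obtain u0 where "\<forall>u\<ge>u0. \<not> enabled A B (Suc n) (st (nr u)) (inp (nr u)) d"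
    using evdis_new[OF d(1)] by blast
  moreover have "d \<in> procs (Suc n)" using d(1) by (auto simp: procs_def)
  ultimately show ?thesis unfolding locally_deadlocked_def using nL_inf' by blast
qed

end

lemma pigeon:
  assumes "finite S" "card S < n" "\<forall>p\<in>{1..n}. f p \<in> S"
  shows "\<exists>i j. 1 \<le> i \<and> i \<le> n \<and> 1 \<le> j \<and> j \<le> n \<and> i \<noteq> j \<and> f i = f j"
proof (rule ccontr)
  assume "\<not> ?thesis"
  then have "inj_on f {1..n}" unfolding inj_on_def by (metis atLeastAtMost_iff)
  then have "card {1..n} \<le> card S" using card_inj_on_le assms by (metis image_subsetI)
  then show False using assms(2) by simp
qed

lemma inf_result:
  assumes "cp_inf A B n \<rho> L i" "locally_deadlocked A B n \<rho> L"
  shows "has_fair_or_finite_deadlock A B (Suc n)"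
proof -
  interpret c: cp_inf A B n \<rho> L i by (rule assms(1))
  have fin: "\<And>t. enat t < L \<Longrightarrow> mv (\<rho> t) = None \<Longrightarrow> \<exists>j\<in>procs n. j \<noteq> i \<and> st (\<rho> t) j = st (\<rho> t) i"
    using c.runNoneL c.inf by auto
  show ?thesis unfolding has_fair_or_finite_deadlock_def deadlocked_def
    using c.new_run[OF fin] c.new_fair c.new_dead[OF assms(2)] by blast
qed

lemma fin_result:
  assumes "cp A B n \<rho> L i" "L = enat m" "j \<in> procs n" "j \<noteq> i" "st (\<rho> (m - 1)) j = st (\<rho> (m - 1)) i"
  shows "has_fair_or_finite_deadlock A B (Suc n)"
proof -
  interpret c: cp A B n \<rho> L i by (rule assms(1))
  have fin: "\<And>t. enat t < L \<Longrightarrow> mv (\<rho> t) = None \<Longrightarrow> \<exists>j\<in>procs n. j \<noteq> i \<and> st (\<rho> t) j = st (\<rho> t) i"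
  proof -
    fix t assume "enat t < L" "mv (\<rho> t) = None"
    then have "L = enat (Suc t)" using c.runNoneL by blast
    then have "t = m - 1" using assms(2) by simp
    then show "\<exists>j\<in>procs n. j \<noteq> i \<and> st (\<rho> t) j = st (\<rho> t) i" using assms(3-5) by blast
  qed
  have "c.nL \<noteq> \<infinity>" using c.nL_fin[OF assms(2)] by simp
  then show ?thesis unfolding has_fair_or_finite_deadlock_def deadlocked_def globally_deadlocked_def
    using c.new_run[OF fin] by blast
qed

theorem mainTheorem10:
  fixes A B :: "('q, 'a) template" and n :: nat
  assumes "wf_template A (states A \<union> states B)"
    and "wf_template B (states A \<union> states B)"
    and "states A \<inter> states B = {}"
    and "alpha A \<inter> alpha B = {}"
    and "n \<ge> card (states B) + 1"
    and "has_fair_or_finite_deadlock A B n"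
  shows "has_fair_or_finite_deadlock A B (n + 1)"
proof -
  have finB: "finite (states B)" using assms(2) unfolding wf_template_def by blast
  have cardB: "card (states B) < n" using assms(5) by simp
  obtain \<rho> L where run: "is_run A B n \<rho> L" and dl: "deadlocked A B n \<rho> L"
    and fo: "strong_fair A B n \<rho> L \<or> L \<noteq> \<infinity>"
    using assms(6) unfolding has_fair_or_finite_deadlock_def by blast
  have n1: "1 \<le> n" using assms(5) by simp
  interpret c1: cp A B n \<rho> L 1 using run n1 by unfold_locales auto
  have validB: "\<And>t p. enat t < L \<Longrightarrow> p \<in> {1..n} \<Longrightarrow> st (\<rho> t) p \<in> states B"
  proof -
    fix t p assume "enat t < L" "p \<in> {1..n}"
    then show "st (\<rho> t) p \<in> states B" using c1.runv[of t p] by (simp add: procs_def tmpl_def)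
  qed
  have "has_fair_or_finite_deadlock A B (Suc n)"
  proof (cases "L = \<infinity>")
    case False
    then obtain m where m: "L = enat m" by auto
    have "0 < L" using c1.run0 by blast
    then have m0: "0 < m" using m by (simp add: zero_enat_def)
    then have tl: "enat (m - 1) < L" using m by simp
    obtain i j where ij: "1 \<le> i" "i \<le> n" "1 \<le> j" "j \<le> n" "i \<noteq> j" "st (\<rho> (m - 1)) i = st (\<rho> (m - 1)) j"
      using pigeon[OF finB cardB, of "st (\<rho> (m - 1))"] validB[OF tl] by blast
    have "cp A B n \<rho> L i" using run ij by unfold_locales auto
    then show ?thesis using fin_result[of A B n \<rho> L i m j] m ij by (simp add: procs_def)
  next
    case True
    then have sf: "strong_fair A B n \<rho> L" using fo by blast
    have ld: "locally_deadlocked A B n \<rho> L" using dl True unfolding deadlocked_def globally_deadlocked_def by blast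
    have allt: "\<And>t. enat t < L" using True by simp
    show ?thesis
    proof (cases "\<exists>i\<in>{1..n}. \<forall>t0. \<exists>t\<ge>t0. mv (\<rho> t) = Some i")
      case True
      then obtain i where i: "1 \<le> i" "i \<le> n" "\<forall>t0. \<exists>t\<ge>t0. mv (\<rho> t) = Some i" by auto
      have "cp_inf A B n \<rho> L i"
        by (unfold_locales) (use run i sf \<open>L = \<infinity>\<close> in auto)
      then show ?thesis using inf_result ld by blast
    next
      case False
      then have "\<forall>p\<in>{1..n}. eventually (\<lambda>t. mv (\<rho> t) \<noteq> Some p) sequentially"
        unfolding eventually_sequentially by force
      then have "eventually (\<lambda>t. \<forall>p\<in>{1..n}. mv (\<rho> t) \<noteq> Some p) sequentially"
        by (simp add: eventually_ball_finite)
      then obtain t1 where t1: "\<And>t p. t \<ge> t1 \<Longrightarrow> p \<in> {1..n} \<Longrightarrow> mv (\<rho> t) \<noteq> Some p"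
        unfolding eventually_sequentially by blast
      have const: "\<And>t p. t \<ge> t1 \<Longrightarrow> p \<in> {1..n} \<Longrightarrow> st (\<rho> t) p = st (\<rho> t1) p"
      proof -
        fix t p assume "t \<ge> t1" "p \<in> {1..n}"
        then show "st (\<rho> t) p = st (\<rho> t1) p"
        proof (induction t rule: dec_induct)
          case base then show ?case by simp
        next
          case (step t)
          have "mv (\<rho> t) \<noteq> None"
          proof
            assume "mv (\<rho> t) = None"
            then have "L = enat (Suc t)" using c1.runNoneL allt by blast
            then show False using True by simp
          qed
          then obtain q where q: "mv (\<rho> t) = Some q" by auto
          have "q \<noteq> p" using t1[OF step(1) step(4)] q by auto
          obtain tr where "st (\<rho> (Suc t)) = (st (\<rho> t))(q := snd (snd (snd tr)))"
            using c1.runStep[OF allt q] by fastforce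
          then show ?case using \<open>q \<noteq> p\<close> step(3,4) by auto
        qed
      qed
      obtain i j where ij: "1 \<le> i" "i \<le> n" "1 \<le> j" "j \<le> n" "i \<noteq> j" "st (\<rho> t1) i = st (\<rho> t1) j"
        using pigeon[OF finB cardB, of "st (\<rho> t1)"] validB[OF allt] by blast
      have ch: "\<forall>t\<ge>t1. mv (\<rho> t) \<noteq> Some i \<and> (\<exists>j\<in>procs n. j \<noteq> i \<and> st (\<rho> t) j = st (\<rho> t) i)"
      proof (intro allI impI conjI)
        fix t assume t: "t1 \<le> t"
        show "mv (\<rho> t) \<noteq> Some i" using t1[OF t] ij by auto
        show "\<exists>j\<in>procs n. j \<noteq> i \<and> st (\<rho> t) j = st (\<rho> t) i"
          using const[OF t, of i] const[OF t, of j] ij by (intro bexI[of _ j]) (auto simp: procs_def)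
      qed
      have "cp_inf A B n \<rho> L i"
        by (unfold_locales) (use run ij sf \<open>L = \<infinity>\<close> ch in auto)
      then show ?thesis using inf_result ld by blast
    qed
  qed
  then show ?thesis by simp
qed

end
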